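(* Let $L$ be a precompact Hausdorff co-Heyting algebra, identified with its image in $\widehat L$. Then: (1) $L$ and $\widehat L$ have the same completely join irreducible elements; (2) every join irreducible element of $L$ is completely join irreducible; (3) for every $x\in\mathcal I^{!\vee}(L)$, the cofoundation rank of $x$ in the ordered set $\mathcal I^{!\vee}(L)$ is finite and equal to $\operatorname{codim}_L x$; (4) $\mathcal I^{!\vee}(L)$ satisfies the ascending chain condition; (5) for every $a\in L$, $a$ is the complete join in $L$ of the set of its join irreducible components.
   Context: A co-Heyting algebra is a bounded distributive lattice $(L,0,1,\vee,\wedge)$ such that $a-b=\min\{c\in L: a\le b\vee c\}$ exists for all $a,b$. For an ideal $I$, $L/I$ is the quotient by $a\equiv_I b\iff(a-b)\vee(b-a)\in I$. $\operatorname{Spec}L$ is the set of prime filters ordered by inclusion; height = foundation rank there; $\operatorname{codim}_La=\min\{\operatorname{height}\mathfrak p: a\in\mathfrak p\}$ ($+\infty$ if none); $dL=\{a:\operatorname{codim}_La\ge d\}$ is an ideal. $L$ is Hausdorff if every nonzero element has finite codimension; precompact if $L/dL$ is finite for every positive integer $d$. $\widehat L$ is the projective limit of the quotients $L/dL$ under the canonical surjections $L/(d+1)L\to L/dL$, and $L$ embeds in it diagonally. $x\ne0$ is join irreducible if $x\le a\vee b$ implies $x\le a$ or $x\le b$; completely join irreducible if $x\le\bigvee A$ (for any $A$ whose join exists) implies $x\le a$ for some $a\in A$; $\mathcal I^{!\vee}(L)$ is the set of completely join irreducible elements. The join irreducible components of $a$ are the maximal elements of the set of join irreducible elements below $a$.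 The cofoundation rank of $x$ in an ordered set $E$ is its foundation rank for the reverse order (rank $\ge\beta+1$ iff some strictly larger element has rank $\ge\beta$; limits by intersection). *)

theory Defs
  imports Main "HOL-Library.Extended_Nat"
begin

(* The co-Heyting algebra L is the whole carrier of a type 'a of class
   {distrib_lattice, bounded_lattice}: 0 = bot, 1 = top, join = sup, meet = inf. *)

definition co_heyting :: "'a::{distrib_lattice,bounded_lattice} itself \<Rightarrow> bool" where
  "co_heyting _ \<longleftrightarrow> (\<forall>a b::'a. \<exists>c. a \<le> sup b c \<and> (\<forall>c'. a \<le> sup b c' \<longrightarrow> c \<le> c'))"

definition cominus :: "'a::{distrib_lattice,bounded_lattice} \<Rightarrow> 'a \<Rightarrow> 'a" where
  "cominus a b = (THE c. a \<le> sup b c \<and> (\<forall>c'. a \<le> sup b c' \<longrightarrow> c \<le> c'))"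

definition prime_filter :: "'a::{distrib_lattice,bounded_lattice} set \<Rightarrow> bool" where
  "prime_filter p \<longleftrightarrow> top \<in> p \<and> bot \<notin> p \<and>
     (\<forall>a b. a \<in> p \<longrightarrow> a \<le> b \<longrightarrow> b \<in> p) \<and>
     (\<forall>a b. a \<in> p \<longrightarrow> b \<in> p \<longrightarrow> inf a b \<in> p) \<and>
     (\<forall>a b. sup a b \<in> p \<longrightarrow> a \<in> p \<or> b \<in> p)"

(* Rank predicate: "rank of x in E w.r.t. the strict relation R is \<ge> n"
   (R y x means y is strictly below x for the relevant order):
   rank \<ge> 0 always; rank \<ge> n+1 iff some y \<in> E with R y x has rank \<ge> n. *)
fun rank_ge :: "('b \<Rightarrow> 'b \<Rightarrow> bool) \<Rightarrow> 'b set \<Rightarrow> 'b \<Rightarrow> nat \<Rightarrow> bool" where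
  "rank_ge R E x 0 = True"
| "rank_ge R E x (Suc n) = (\<exists>y\<in>E. R y x \<and> rank_ge R E y n)"

(* Foundation rank, with all ranks \<ge> \<omega> (and undefined ranks) collapsed to \<infinity>. *)
definition rank :: "('b \<Rightarrow> 'b \<Rightarrow> bool) \<Rightarrow> 'b set \<Rightarrow> 'b \<Rightarrow> enat" where
  "rank R E x = Sup {enat n | n. rank_ge R E x n}"

definition Spec :: "'a::{distrib_lattice,bounded_lattice} set set" where
  "Spec = {p. prime_filter p}"

definition height :: "'a::{distrib_lattice,bounded_lattice} set \<Rightarrow> enat" where
  "height p = rank (\<lambda>q p. q \<subset> p) Spec p"

definition codim :: "'a::{distrib_lattice,bounded_lattice} \<Rightarrow> enat" where
  "codim a = Inf {height p | p. p \<in> Spec \<and> a \<in> p}"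

definition dL :: "nat \<Rightarrow> 'a::{distrib_lattice,bounded_lattice} set" where
  "dL d = {a. codim a \<ge> enat d}"

definition qrel :: "'a::{distrib_lattice,bounded_lattice} set \<Rightarrow> ('a \<times> 'a) set" where
  "qrel I = {(a, b). sup (cominus a b) (cominus b a) \<in> I}"

definition quot :: "'a::{distrib_lattice,bounded_lattice} set \<Rightarrow> 'a set set" where
  "quot I = UNIV // qrel I"

definition quot_le :: "'a::{distrib_lattice,bounded_lattice} set \<Rightarrow> 'a set \<Rightarrow> 'a set \<Rightarrow> bool" where
  "quot_le I X Y \<longleftrightarrow> (\<exists>a\<in>X. \<exists>b\<in>Y. (sup a b, b) \<in> qrel I)"

definition hausdorff :: "'a::{distrib_lattice,bounded_lattice} itself \<Rightarrow> bool" where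
  "hausdorff _ \<longleftrightarrow> (\<forall>a::'a. a \<noteq> bot \<longrightarrow> codim a \<noteq> \<infinity>)"

definition precompact :: "'a::{distrib_lattice,bounded_lattice} itself \<Rightarrow> bool" where
  "precompact _ \<longleftrightarrow> (\<forall>d::nat. d \<ge> 1 \<longrightarrow> finite (quot (dL d :: 'a set)))"

(* Completion \<widehat>L: x d is the component in L/(d+1)L (index shifted by one),
   compatible under the canonical surjections L/(d+2)L \<rightarrow> L/(d+1)L,
   [a] \<mapsto> [a]. *)
definition hatL :: "(nat \<Rightarrow> 'a::{distrib_lattice,bounded_lattice} set) set" where
  "hatL = {x. (\<forall>d. x d \<in> quot (dL (Suc d))) \<and>
              (\<forall>d. x d = qrel (dL (Suc d)) `` x (Suc d))}"

definition hat_le :: "(nat \<Rightarrow> 'a::{distrib_lattice,bounded_lattice} set) \<Rightarrow> (nat \<Rightarrow> 'a set) \<Rightarrow> bool" where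
  "hat_le x y \<longleftrightarrow> (\<forall>d. quot_le (dL (Suc d)) (x d) (y d))"

definition hat_emb :: "'a::{distrib_lattice,bounded_lattice} \<Rightarrow> nat \<Rightarrow> 'a set" where
  "hat_emb a = (\<lambda>d. qrel (dL (Suc d)) `` {a})"

definition is_lub :: "('b \<Rightarrow> 'b \<Rightarrow> bool) \<Rightarrow> 'b set \<Rightarrow> 'b set \<Rightarrow> 'b \<Rightarrow> bool" where
  "is_lub le E A s \<longleftrightarrow> s \<in> E \<and> (\<forall>a\<in>A. le a s) \<and> (\<forall>t\<in>E. (\<forall>a\<in>A. le a t) \<longrightarrow> le s t)"

definition cji :: "('b \<Rightarrow> 'b \<Rightarrow> bool) \<Rightarrow> 'b set \<Rightarrow> 'b \<Rightarrow> 'b set" where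
  "cji le E bt = {x \<in> E. x \<noteq> bt \<and>
      (\<forall>A s. A \<subseteq> E \<longrightarrow> is_lub le E A s \<longrightarrow> le x s \<longrightarrow> (\<exists>a\<in>A. le x a))}"

definition join_irred :: "'a::{distrib_lattice,bounded_lattice} \<Rightarrow> bool" where
  "join_irred x \<longleftrightarrow> x \<noteq> bot \<and> (\<forall>a b. x \<le> sup a b \<longrightarrow> x \<le> a \<or> x \<le> b)"

definition ji_components :: "'a::{distrib_lattice,bounded_lattice} \<Rightarrow> 'a set" where
  "ji_components a = {x. join_irred x \<and> x \<le> a \<and>
      (\<forall>y. join_irred y \<longrightarrow> y \<le> a \<longrightarrow> x \<le> y \<longrightarrow> y = x)}"

end

theory Submission
  imports Defs
begin


lemma rank_ge_Suc_mono: "rank_ge R E x (Suc n) \<Longrightarrow> rank_ge R E x n"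
  by (induction n arbitrary: x) auto

lemma rank_ge_mono_add: "rank_ge R E x (m + k) \<Longrightarrow> rank_ge R E x m"
proof (induction k)
  case (Suc k)
  have "rank_ge R E x (Suc (m + k))" using Suc.prems by simp
  hence "rank_ge R E x (m + k)" by (rule rank_ge_Suc_mono)
  thus ?case by (rule Suc.IH)
qed simp

lemma rank_ge_mono: "rank_ge R E x n \<Longrightarrow> m \<le> n \<Longrightarrow> rank_ge R E x m"
  using rank_ge_mono_add[of R E x m "n - m"] by simp

lemma enat_le_rank_iff: "enat n \<le> rank R E x \<longleftrightarrow> rank_ge R E x n"
proof
  assume "rank_ge R E x n" thus "enat n \<le> rank R E x"
    unfolding rank_def by (intro Sup_upper) auto
next
  assume A: "enat n \<le> rank R E x"
  show "rank_ge R E x n"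
  proof (rule ccontr)
    assume N: "\<not> rank_ge R E x n"
    hence n0: "n \<noteq> 0" by (cases n) auto
    have "\<forall>k. rank_ge R E x k \<longrightarrow> k < n"
      using N rank_ge_mono by (metis not_less)
    hence "rank R E x \<le> enat (n - 1)"
      unfolding rank_def by (intro Sup_least) auto
    from order_trans[OF A this] have "n \<le> n - 1" by simp
    with n0 show False by simp
  qed
qed

lemma enat_le_all: "(\<And>n. enat n \<le> x \<Longrightarrow> enat n \<le> y) \<Longrightarrow> x \<le> (y::enat)"
proof (cases x)
  case (enat k) assume "\<And>n. enat n \<le> x \<Longrightarrow> enat n \<le> y" thus ?thesis using enat by auto
next
  case infinity assume H: "\<And>n. enat n \<le> x \<Longrightarrow> enat n \<le> y"
  show ?thesis
  proof (cases y)
    case (enat m) with H[of "Suc m"] infinity show ?thesis by auto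
  qed (simp)
qed

lemma rank_eqI: "(\<And>n. rank_ge R E x n \<longleftrightarrow> rank_ge R' E' x' n) \<Longrightarrow> rank R E x = rank R' E' x'"
  unfolding rank_def by simp

lemma no_desc_nat: "\<not> (\<forall>n. (g::nat\<Rightarrow>nat) (Suc n) < g n)"
proof
  assume H: "\<forall>n. g (Suc n) < g n"
  have "g n + n \<le> g 0" for n
  proof (induction n)
    case (Suc n)
    have "g (Suc n) < g n" using H by blast
    with Suc show ?case by simp
  qed simp
  from this[of "Suc (g 0)"] show False by simp
qed

lemma finite_reps: "finite (f ` A) \<Longrightarrow> \<exists>A0 \<subseteq> A. finite A0 \<and> (\<forall>a\<in>A. \<exists>a0\<in>A0. f a = f a0)"
proof -
  assume F: "finite (f ` A)"
  define A0 where "A0 = (\<lambda>y. SOME a. a \<in> A \<and> f a = y) ` (f ` A)"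
  have "\<forall>y\<in>f ` A. (SOME a. a \<in> A \<and> f a = y) \<in> A \<and> f (SOME a. a \<in> A \<and> f a = y) = y"
    by (auto intro: someI2)
  hence "A0 \<subseteq> A" unfolding A0_def by auto
  moreover have "\<forall>a\<in>A. \<exists>a0\<in>A0. f a = f a0"
  proof
    fix a assume "a \<in> A"
    hence "f a \<in> f ` A" by simp
    hence "(SOME b. b \<in> A \<and> f b = f a) \<in> A0" "f (SOME b. b \<in> A \<and> f b = f a) = f a"
      using \<open>\<forall>y\<in>f ` A. _\<close> unfolding A0_def by auto
    thus "\<exists>a0\<in>A0. f a = f a0" by metis
  qed
  ultimately show ?thesis using F unfolding A0_def by blast
qed

locale chp =
  fixes T :: "'a::{distrib_lattice,bounded_lattice} itself"
  assumes CH: "co_heyting T" and HD: "hausdorff T" and PC: "precompact T"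
begin

lemma cominus_spec: "(a::'a) \<le> sup b (cominus a b) \<and> (\<forall>c. a \<le> sup b c \<longrightarrow> cominus a b \<le> c)"
proof -
  from CH obtain c where c: "a \<le> sup b c \<and> (\<forall>c'. a \<le> sup b c' \<longrightarrow> c \<le> c')"
    unfolding co_heyting_def by blast
  have "\<exists>!c. a \<le> sup b c \<and> (\<forall>c'. a \<le> sup b c' \<longrightarrow> c \<le> c')"
    using c by (metis order_antisym)
  thus ?thesis unfolding cominus_def by (rule theI')
qed

lemma cm_le_iff: "cominus a b \<le> c \<longleftrightarrow> (a::'a) \<le> sup b c"
  using cominus_spec[of a b] by (meson order_trans sup_mono order_refl)

lemma cm_cover: "(a::'a) \<le> sup b (cominus a b)" using cominus_spec by blast

lemma cm_le: "cominus a b \<le> (a::'a)" by (simp add: cm_le_iff)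

lemma cm_zero_iff: "cominus a b = bot \<longleftrightarrow> (a::'a) \<le> b"
  by (metis bot.extremum_unique cm_le_iff sup_bot_right)

lemma cm_anti: "b \<le> b' \<Longrightarrow> cominus a b' \<le> cominus (a::'a) b"
  by (meson cm_cover cm_le_iff order_trans sup_mono order_refl)

lemma cm_mono: "a \<le> a' \<Longrightarrow> cominus a b \<le> cominus (a'::'a) b"
  by (meson cm_cover cm_le_iff order_trans)

lemma cm_eqI: "(\<And>z. x \<le> z \<longleftrightarrow> y \<le> z) \<Longrightarrow> x = (y::'a)"
  by (meson order_antisym order_refl)

lemma cm_cm: "cominus (cominus a b) c = cominus (a::'a) (sup b c)"
  by (rule cm_eqI) (simp add: cm_le_iff sup_assoc)

lemma cm_self: "cominus (cominus a w) w = cominus (a::'a) w"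
  by (simp add: cm_cm)

lemma cm_triangle: "cominus a c \<le> sup (cominus a b) (cominus (b::'a) c)"
proof -
  have "a \<le> sup b (cominus a b)" by (rule cm_cover)
  also have "b \<le> sup c (cominus b c)" by (rule cm_cover)
  hence "sup b (cominus a b) \<le> sup c (sup (cominus a b) (cominus b c))"
    by (simp add: le_supI1 le_supI2 sup.coboundedI2 sup_commute) (meson le_sup_iff order_trans sup_ge1 sup_ge2)
  finally show ?thesis by (simp add: cm_le_iff)
qed

lemma cm_bot: "cominus a bot = (a::'a)"
  by (rule cm_eqI) (simp add: cm_le_iff)

lemma cm_gen: "cominus a w \<le> sup v w \<Longrightarrow> cominus (a::'a) w \<le> v"
  by (metis cm_le_iff cm_self sup_commute)

end


context chp begin

abbreviation ht :: "'a set \<Rightarrow> enat" where "ht p \<equiv> height p"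

lemma Spec_iff: "p \<in> (Spec::'a set set) \<longleftrightarrow> prime_filter p" by (simp add: Spec_def)

lemma pf_top: "p \<in> Spec \<Longrightarrow> (top::'a) \<in> p" by (simp add: Spec_def prime_filter_def)
lemma pf_bot: "p \<in> Spec \<Longrightarrow> (bot::'a) \<notin> p" by (simp add: Spec_def prime_filter_def)
lemma pf_up: "p \<in> Spec \<Longrightarrow> (a::'a) \<in> p \<Longrightarrow> a \<le> b \<Longrightarrow> b \<in> p" by (simp add: Spec_def prime_filter_def)
lemma pf_inf: "p \<in> Spec \<Longrightarrow> (a::'a) \<in> p \<Longrightarrow> b \<in> p \<Longrightarrow> inf a b \<in> p" by (simp add: Spec_def prime_filter_def)
lemma pf_sup: "p \<in> Spec \<Longrightarrow> sup (a::'a) b \<in> p \<Longrightarrow> a \<in> p \<or> b \<in> p" by (simp add: Spec_def prime_filter_def)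
lemma pf_sup_notin: "p \<in> Spec \<Longrightarrow> (a::'a) \<notin> p \<Longrightarrow> b \<notin> p \<Longrightarrow> sup a b \<notin> p" using pf_sup by blast

lemma ht_ge_iff: "enat n \<le> ht p \<longleftrightarrow> rank_ge (\<lambda>q p. q \<subset> p) (Spec::'a set set) p n"
  unfolding height_def by (rule enat_le_rank_iff)

lemma ht_step: "(q::'a set) \<in> Spec \<Longrightarrow> q \<subset> p \<Longrightarrow> enat n \<le> ht q \<Longrightarrow> enat (Suc n) \<le> ht p"
  by (auto simp: ht_ge_iff)

lemma ht_mono: "(q::'a set) \<in> Spec \<Longrightarrow> q \<subseteq> p \<Longrightarrow> ht q \<le> ht p"
proof (cases "q = p")
  case False
  assume "q \<in> Spec" "q \<subseteq> p"
  with False have "q \<subset> p" by auto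
  show ?thesis
  proof (rule enat_le_all)
    fix n assume "enat n \<le> ht q"
    from ht_step[OF \<open>q \<in> Spec\<close> \<open>q \<subset> p\<close> this] have "enat (Suc n) \<le> ht p" .
    show "enat n \<le> ht p"
    proof -
      have "enat n \<le> enat (Suc n)" by simp
      thus ?thesis using \<open>enat (Suc n) \<le> ht p\<close> by (rule order_trans)
    qed
  qed
qed simp

lemma ht_strict: "(q::'a set) \<in> Spec \<Longrightarrow> q \<subset> p \<Longrightarrow> ht p = enat m \<Longrightarrow> \<exists>n. ht q = enat n \<and> n < m"
proof -
  assume q: "q \<in> Spec" "q \<subset> p" "ht p = enat m"
  have "ht q \<noteq> \<infinity>"
  proof
    assume "ht q = \<infinity>"
    hence "enat m \<le> ht q" by simp
    from ht_step[OF q(1,2) this] q(3) show False by simp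
  qed
  then obtain n where n: "ht q = enat n" by (cases "ht q") auto
  from ht_step[OF q(1,2)] n q(3) have "Suc n \<le> m" by simp
  with n show ?thesis by auto
qed

lemma ht_descend: "(r::'a set) \<in> Spec \<Longrightarrow> ht r = enat m \<Longrightarrow> k \<le> m \<Longrightarrow> \<exists>z\<in>Spec. z \<subseteq> r \<and> ht z = enat k"
proof (induction m arbitrary: r)
  case 0 thus ?case by auto
next
  case (Suc m)
  show ?case
  proof (cases "k = Suc m")
    case True with Suc.prems show ?thesis by auto
  next
    case False
    hence km: "k \<le> m" using Suc.prems by simp
    have "rank_ge (\<lambda>q p. q \<subset> p) Spec r (Suc m)" using Suc.prems(2) ht_ge_iff[of "Suc m" r] by simp
    then obtain y where y: "y \<in> Spec" "y \<subset> r" "rank_ge (\<lambda>q p. q \<subset> p) Spec y m" by auto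
    from ht_strict[OF y(1,2) Suc.prems(2)] obtain n where n: "ht y = enat n" "n < Suc m" by auto
    from y(3) have "enat m \<le> ht y" using ht_ge_iff by blast
    with n have "ht y = enat m" by simp
    from Suc.IH[OF y(1) this km] y(2) show ?thesis by blast
  qed
qed

lemma codim_le: "p \<in> Spec \<Longrightarrow> (a::'a) \<in> p \<Longrightarrow> codim a \<le> ht p"
  unfolding codim_def by (rule Inf_lower) auto

lemma codim_ge_iff: "k \<le> codim (a::'a) \<longleftrightarrow> (\<forall>p\<in>Spec. a \<in> p \<longrightarrow> k \<le> ht p)"
  unfolding codim_def by (auto simp: le_Inf_iff)

lemma codim_attained: "codim (a::'a) \<noteq> \<infinity> \<Longrightarrow> \<exists>p\<in>Spec. a \<in> p \<and> ht p = codim a"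
proof -
  assume H: "codim a \<noteq> \<infinity>"
  let ?S = "{height p | p. p \<in> Spec \<and> a \<in> p}"
  have "?S \<noteq> {}"
  proof
    assume E: "?S = {}"
    have "codim a = Inf {}" unfolding codim_def E by (rule refl)
    with H show False by (simp add: top_enat_def)
  qed
  hence "(LEAST x. x \<in> ?S) \<in> ?S" by (metis (mono_tags, lifting) LeastI ex_in_conv)
  moreover have "codim a = (LEAST x. x \<in> ?S)" unfolding codim_def Inf_enat_def
    by (simp only: \<open>?S \<noteq> {}\<close> if_False)
  ultimately show ?thesis by auto
qed

lemma codim_anti: "(a::'a) \<le> b \<Longrightarrow> codim b \<le> codim a"
  unfolding codim_ge_iff[of "codim b"]
proof (intro ballI impI)
  fix p assume "a \<le> b" "p \<in> Spec" "a \<in> p"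
  from pf_up[OF \<open>p \<in> Spec\<close> \<open>a \<in> p\<close> \<open>a \<le> b\<close>] have "b \<in> p" .
  thus "codim b \<le> ht p" by (rule codim_le[OF \<open>p \<in> Spec\<close>])
qed

lemma codim_bot: "codim (bot::'a) = \<infinity>"
  unfolding codim_def using pf_bot by (auto simp: Inf_enat_def)

lemma codim_fin: "(a::'a) \<noteq> bot \<Longrightarrow> codim a \<noteq> \<infinity>"
  using HD unfolding hausdorff_def by blast

lemma dL_iff: "(a::'a) \<in> dL k \<longleftrightarrow> enat k \<le> codim a" by (simp add: dL_def)
lemma dL_down: "(a::'a) \<in> dL k \<Longrightarrow> b \<le> a \<Longrightarrow> b \<in> dL k"
  unfolding dL_iff by (rule order_trans[OF _ codim_anti])
lemma dL_bot: "(bot::'a) \<in> dL k" by (simp add: dL_iff codim_bot)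
lemma dL_sup: "(a::'a) \<in> dL k \<Longrightarrow> b \<in> dL k \<Longrightarrow> sup a b \<in> dL k"
  by (auto simp: dL_iff codim_ge_iff dest: pf_sup)
lemma dL_anti: "k \<le> k' \<Longrightarrow> dL k' \<subseteq> (dL k :: 'a set)"
proof
  fix x assume "k \<le> k'" "x \<in> (dL k' :: 'a set)"
  hence "enat k \<le> enat k'" "enat k' \<le> codim x" by (simp_all add: dL_iff)
  hence "enat k \<le> codim x" by (rule order_trans)
  thus "x \<in> dL k" by (simp add: dL_iff)
qed
lemma dL_notin: "(a::'a) \<in> dL k \<Longrightarrow> p \<in> Spec \<Longrightarrow> ht p < enat k \<Longrightarrow> a \<notin> p"
  by (auto simp: dL_iff codim_ge_iff)

lemma prime_sep:
  assumes J0: "(bot::'a) \<in> J" and Jd: "\<And>a b. a \<in> J \<Longrightarrow> b \<le> a \<Longrightarrow> b \<in> J"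
    and Js: "\<And>a b. a \<in> J \<Longrightarrow> b \<in> J \<Longrightarrow> sup a b \<in> J" and eJ: "\<And>j. j \<in> J \<Longrightarrow> \<not> e \<le> j"
  shows "\<exists>P\<in>Spec. e \<in> P \<and> P \<inter> J = {}"
proof -
  define S where "S = {F. e \<in> F \<and> (\<forall>a b. a \<in> F \<longrightarrow> a \<le> b \<longrightarrow> b \<in> F) \<and> (\<forall>a b. a \<in> F \<longrightarrow> b \<in> F \<longrightarrow> inf a b \<in> F) \<and> F \<inter> J = {}}"
  have E: "{y. e \<le> y} \<in> S" unfolding S_def using eJ by auto
  have "\<forall>C\<in>chains S. \<exists>U\<in>S. \<forall>X\<in>C. X \<subseteq> U"
  proof
    fix C assume C: "C \<in> chains S"
    show "\<exists>U\<in>S. \<forall>X\<in>C. X \<subseteq> U"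
    proof (cases "C = {}")
      case True with E show ?thesis by blast
    next
      case False
      have CS: "C \<subseteq> S" and ch: "\<forall>A\<in>C. \<forall>B\<in>C. A \<subseteq> B \<or> B \<subseteq> A"
        using C unfolding chains_def chain_subset_def by auto
      have "\<Union>C \<in> S"
        unfolding S_def
      proof (intro CollectI conjI allI impI)
        show "e \<in> \<Union>C" using False CS unfolding S_def by auto
        show "b \<in> \<Union>C" if "a \<in> \<Union>C" "a \<le> b" for a b using that CS unfolding S_def by blast
        show "inf a b \<in> \<Union>C" if "a \<in> \<Union>C" "b \<in> \<Union>C" for a b
        proof -
          from that obtain X Y where XY: "X \<in> C" "Y \<in> C" "a \<in> X" "b \<in> Y" by auto
          from ch XY(1,2) have "X \<subseteq> Y \<or> Y \<subseteq> X" by blast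
          thus ?thesis using XY CS unfolding S_def by blast
        qed
        show "\<Union>C \<inter> J = {}" using CS unfolding S_def by blast
      qed
      thus ?thesis by blast
    qed
  qed
  from Zorn_Lemma2[OF this] obtain M where M: "M \<in> S" and Mmax: "\<forall>X\<in>S. M \<subseteq> X \<longrightarrow> X = M" by blast
  have Me: "e \<in> M" and Mup: "\<And>a b. a \<in> M \<Longrightarrow> a \<le> b \<Longrightarrow> b \<in> M"
    and Minf: "\<And>a b. a \<in> M \<Longrightarrow> b \<in> M \<Longrightarrow> inf a b \<in> M" and MJ: "M \<inter> J = {}"
    using M unfolding S_def by blast+
  have Mtop: "top \<in> M" using Mup[OF Me] by simp
  have key: "\<exists>m\<in>M. \<exists>j\<in>J. inf m c \<le> j" if cM: "c \<notin> M" for c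
  proof (rule ccontr)
    assume N: "\<not> ?thesis"
    define F where "F = {z. \<exists>m\<in>M. inf m c \<le> z}"
    have "F \<in> S" unfolding S_def
    proof (intro CollectI conjI allI impI)
      show "e \<in> F" unfolding F_def using Me inf_le1 by blast
      show "b \<in> F" if "a \<in> F" "a \<le> b" for a b
      proof -
        from that(1) obtain m where "m \<in> M" "inf m c \<le> a" unfolding F_def by blast
        have "inf m c \<le> b" using \<open>inf m c \<le> a\<close> that(2) by (rule order_trans)
        with \<open>m \<in> M\<close> show ?thesis unfolding F_def by blast
      qed
      show "inf a b \<in> F" if "a \<in> F" "b \<in> F" for a b
      proof -
        from that obtain m m' where "m \<in> M" "m' \<in> M" "inf m c \<le> a" "inf m' c \<le> b" unfolding F_def by auto
        have h1: "inf (inf m m') c \<le> inf m c" by (rule inf_mono[OF inf_le1 order_refl])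
        have h2: "inf (inf m m') c \<le> inf m' c" by (rule inf_mono[OF inf_le2 order_refl])
        have "inf (inf m m') c \<le> inf a b"
          using order_trans[OF h1 \<open>inf m c \<le> a\<close>] order_trans[OF h2 \<open>inf m' c \<le> b\<close>] by (rule le_infI)
        with Minf[OF \<open>m \<in> M\<close> \<open>m' \<in> M\<close>] show ?thesis unfolding F_def by blast
      qed
      show "F \<inter> J = {}" using N unfolding F_def by blast
    qed
    moreover have "M \<subseteq> F" unfolding F_def using inf_le1 by blast
    ultimately have "F = M" using Mmax by blast
    moreover have "c \<in> F" unfolding F_def using Mtop inf_le2 by blast
    ultimately show False using cM by simp
  qed
  have "prime_filter M" unfolding prime_filter_def
  proof (intro conjI allI impI)
    show "top \<in> M" by (rule Mtop)
    show "bot \<notin> M" using MJ J0 by blast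
    show "b \<in> M" if "a \<in> M" "a \<le> b" for a b using that Mup by blast
    show "inf a b \<in> M" if "a \<in> M" "b \<in> M" for a b using that Minf by blast
    show "a \<in> M \<or> b \<in> M" if ab: "sup a b \<in> M" for a b
    proof (rule ccontr)
      assume "\<not> (a \<in> M \<or> b \<in> M)"
      hence "a \<notin> M" "b \<notin> M" by auto
      from key[OF this(1)] key[OF this(2)] obtain m1 j1 m2 j2 where "m1 \<in> M" "j1 \<in> J" "inf m1 a \<le> j1" "m2 \<in> M" "j2 \<in> J" "inf m2 b \<le> j2"
        by blast
      let ?m = "inf m1 m2"
      have mM: "inf ?m (sup a b) \<in> M" using Minf[OF Minf[OF \<open>m1 \<in> M\<close> \<open>m2 \<in> M\<close>] ab] .
      have "inf ?m (sup a b) = sup (inf ?m a) (inf ?m b)" by (rule inf_sup_distrib1)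
      also have "\<dots> \<le> sup j1 j2"
        by (fact sup_mono[OF order_trans[OF inf_mono[OF inf_le1 order_refl] \<open>inf m1 a \<le> j1\<close>]
             order_trans[OF inf_mono[OF inf_le2 order_refl] \<open>inf m2 b \<le> j2\<close>]])
      finally have "sup j1 j2 \<in> M" using Mup[OF mM] by blast
      with Js[OF \<open>j1 \<in> J\<close> \<open>j2 \<in> J\<close>] MJ show False by blast
    qed
  qed
  thus ?thesis using Me MJ by (auto simp: Spec_def)
qed

lemma GL:
  assumes r: "r \<in> Spec" and er: "cominus a w \<in> r" and wr: "(w::'a) \<in> r"
  shows "\<exists>P\<in>Spec. P \<subset> r \<and> cominus a w \<in> P"
proof -
  define J where "J = {z. \<exists>v. v \<notin> r \<and> z \<le> sup v w}"
  have "\<exists>P\<in>Spec. cominus a w \<in> P \<and> P \<inter> J = {}"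
  proof (rule prime_sep)
    show "bot \<in> J" unfolding J_def using pf_bot[OF r] by auto
    show "b \<in> J" if "a' \<in> J" "b \<le> a'" for a' b
    proof -
      from that(1) obtain v where "v \<notin> r" "a' \<le> sup v w" unfolding J_def by blast
      have "b \<le> sup v w" using that(2) \<open>a' \<le> sup v w\<close> by (rule order_trans)
      with \<open>v \<notin> r\<close> show ?thesis unfolding J_def by blast
    qed
    show "sup a' b \<in> J" if "a' \<in> J" "b \<in> J" for a' b
    proof -
      from that obtain v v' where "v \<notin> r" "a' \<le> sup v w" "v' \<notin> r" "b \<le> sup v' w" unfolding J_def by auto
      have s1: "sup v w \<le> sup (sup v v') w" by (rule sup_mono[OF sup_ge1 order_refl])
      have s2: "sup v' w \<le> sup (sup v v') w" by (rule sup_mono[OF sup_ge2 order_refl])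
      have "sup a' b \<le> sup (sup v v') w"
        using order_trans[OF \<open>a' \<le> sup v w\<close> s1] order_trans[OF \<open>b \<le> sup v' w\<close> s2] by (rule le_supI)
      moreover have "sup v v' \<notin> r" using pf_sup_notin[OF r] \<open>v \<notin> r\<close> \<open>v' \<notin> r\<close> by blast
      ultimately show ?thesis unfolding J_def by blast
    qed
    show "\<not> cominus a w \<le> j" if "j \<in> J" for j
    proof
      assume "cominus a w \<le> j"
      from that obtain v where "v \<notin> r" "j \<le> sup v w" unfolding J_def by auto
      have "cominus a w \<le> sup v w" using \<open>cominus a w \<le> j\<close> \<open>j \<le> sup v w\<close> by (rule order_trans)
      hence "cominus a w \<le> v" by (rule cm_gen)
      with pf_up[OF r er] \<open>v \<notin> r\<close> show False by blast
    qed
  qed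
  then obtain P where P: "P \<in> Spec" "cominus a w \<in> P" "P \<inter> J = {}" by blast
  have "w \<in> J" unfolding J_def using pf_bot[OF r] by auto
  have "P \<subseteq> r"
  proof
    fix z assume "z \<in> P"
    show "z \<in> r"
    proof (rule ccontr)
      assume "z \<notin> r" hence "z \<in> J" unfolding J_def by auto
      with P \<open>z \<in> P\<close> show False by blast
    qed
  qed
  with wr \<open>w \<in> J\<close> P show ?thesis by blast
qed

lemma GEN:
  assumes "cominus a w \<noteq> (bot::'a)"
  shows "\<exists>r\<in>Spec. cominus a w \<in> r \<and> a \<in> r \<and> w \<notin> r \<and> ht r = codim (cominus a w) \<and> codim (cominus a w) \<noteq> \<infinity>"
proof -
  have fin: "codim (cominus a w) \<noteq> \<infinity>" using codim_fin assms by blast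
  from codim_attained[OF fin] obtain r where r: "r \<in> Spec" "cominus a w \<in> r" "ht r = codim (cominus a w)" by blast
  have ar: "a \<in> r" using pf_up[OF r(1,2) cm_le] .
  have "w \<notin> r"
  proof
    assume "w \<in> r"
    from GL[OF r(1,2) this] obtain P where P: "P \<in> Spec" "P \<subset> r" "cominus a w \<in> P" by blast
    from fin r(3) obtain m where m: "ht r = enat m" by (cases "ht r") auto
    from ht_strict[OF P(1,2) m] obtain n where "ht P = enat n" "n < m" by blast
    moreover have "codim (cominus a w) \<le> ht P" using codim_le[OF P(1,3)] .
    ultimately show False using r(3) m by (metis enat_ord_simps(1) not_le)
  qed
  with r ar fin show ?thesis by blast
qed

end


context chp begin

lemma qrel_iff: "(a,b) \<in> qrel (dL k) \<longleftrightarrow> cominus a b \<in> dL k \<and> cominus b (a::'a) \<in> dL k"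
  unfolding qrel_def using dL_down dL_sup by (auto intro: dL_down[OF _ sup_ge1] dL_down[OF _ sup_ge2])

lemma qrel_refl: "(a,a) \<in> qrel (dL k :: 'a set)"
proof -
  have "cominus a a = bot" by (simp add: cm_zero_iff)
  thus ?thesis by (simp add: qrel_iff dL_bot)
qed

lemma qrel_sym: "(a,b) \<in> qrel (dL k :: 'a set) \<Longrightarrow> (b,a) \<in> qrel (dL k)"
  by (simp add: qrel_iff)

lemma qrel_trans: "(a,b) \<in> qrel (dL k :: 'a set) \<Longrightarrow> (b,c) \<in> qrel (dL k) \<Longrightarrow> (a,c) \<in> qrel (dL k)"
  unfolding qrel_iff
  by (meson cm_triangle dL_down dL_sup)

lemma qrel_mono: "k \<le> k' \<Longrightarrow> (a,b) \<in> qrel (dL k' :: 'a set) \<Longrightarrow> (a,b) \<in> qrel (dL k)"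
  unfolding qrel_iff using dL_anti by blast

lemma finite_quot: "finite (quot (dL (Suc n) :: 'a set))"
  using PC unfolding precompact_def by simp

lemma finite_low: "finite {p \<in> (Spec::'a set set). ht p \<le> enat n}"
proof -
  let ?I = "dL (Suc n) :: 'a set"
  let ?S = "{p \<in> (Spec::'a set set). ht p \<le> enat n}"
  have sat: "b \<in> p" if "p \<in> ?S" "a \<in> p" "(a,b) \<in> qrel ?I" for p a b
  proof -
    from that have p0: "p \<in> Spec" "ht p \<le> enat n" by auto
    have "enat n < enat (Suc n)" by simp
    with p0 have p: "p \<in> Spec" "ht p < enat (Suc n)" using le_less_trans by blast+
    from that(3) have "cominus a b \<in> ?I" by (simp add: qrel_iff)
    from dL_notin[OF this p] have "cominus a b \<notin> p" .
    moreover have "sup b (cominus a b) \<in> p" using pf_up[OF p(1) that(2) cm_cover] .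
    ultimately show "b \<in> p" using pf_sup[OF p(1)] by blast
  qed
  define f where "f p = {X \<in> quot ?I. X \<subseteq> p}" for p
  have U: "p = \<Union>(f p)" if "p \<in> ?S" for p
  proof
    show "p \<subseteq> \<Union>(f p)"
    proof
      fix a assume "a \<in> p"
      have "qrel ?I `` {a} \<in> quot ?I" unfolding quot_def by (rule quotientI) simp
      moreover have "qrel ?I `` {a} \<subseteq> p" using sat[OF that \<open>a \<in> p\<close>] by auto
      moreover have "a \<in> qrel ?I `` {a}" using qrel_refl by auto
      ultimately show "a \<in> \<Union>(f p)" unfolding f_def by blast
    qed
  qed (auto simp: f_def)
  have "inj_on f ?S"
    by (rule inj_onI) (metis U)
  moreover have "f ` ?S \<subseteq> Pow (quot ?I)" unfolding f_def by auto
  hence "finite (f ` ?S)" using finite_quot by (meson finite_Pow_iff finite_subset)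
  ultimately show ?thesis using finite_imageD by blast
qed

lemma avoid: "finite Q \<Longrightarrow> Q \<subseteq> Spec \<Longrightarrow> p \<in> Spec \<Longrightarrow> (\<forall>q\<in>Q. \<not> p \<subseteq> q) \<Longrightarrow> \<exists>x::'a. x \<in> p \<and> (\<forall>q\<in>Q. x \<notin> q)"
proof (induction Q rule: finite_induct)
  case empty thus ?case using pf_top by blast
next
  case (insert q Q)
  then obtain x where x: "x \<in> p" "\<forall>q\<in>Q. x \<notin> q" by auto
  from insert.prems obtain c where c: "c \<in> p" "c \<notin> q" by auto
  have "inf x c \<in> p" using pf_inf[OF insert.prems(2) x(1) c(1)] .
  moreover have "inf x c \<notin> q'" if "q' \<in> insert q Q" for q'
  proof
    assume A: "inf x c \<in> q'"
    have q': "q' \<in> Spec" using that insert.prems(1) by auto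
    have "x \<in> q'" using pf_up[OF q' A inf_le1] .
    moreover have "c \<in> q'" using pf_up[OF q' A inf_le2] .
    ultimately show False using that x c by auto
  qed
  ultimately show ?case by blast
qed

lemma sep: "finite W \<Longrightarrow> W \<subseteq> Spec \<Longrightarrow> finite Q \<Longrightarrow> Q \<subseteq> Spec \<Longrightarrow> (\<forall>w\<in>W. \<forall>q\<in>Q. \<not> w \<subseteq> q)
   \<Longrightarrow> \<exists>M::'a. (\<forall>w\<in>W. M \<in> w) \<and> (\<forall>q\<in>Q. M \<notin> q)"
proof (induction W rule: finite_induct)
  case empty thus ?case using pf_bot by blast
next
  case (insert w W)
  then obtain M where M: "\<forall>w\<in>W. M \<in> w" "\<forall>q\<in>Q. M \<notin> q" by auto
  have wS: "w \<in> Spec" using insert.prems(1) by auto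
  have "\<forall>q\<in>Q. \<not> w \<subseteq> q" using insert.prems(4) by auto
  from avoid[OF insert.prems(2,3) wS this] obtain m where m: "m \<in> w" "\<forall>q\<in>Q. m \<notin> q" by auto
  have "\<forall>w'\<in>insert w W. sup M m \<in> w'"
  proof
    fix w' assume "w' \<in> insert w W"
    hence w': "w' \<in> Spec" using insert.prems(1) by auto
    show "sup M m \<in> w'"
    proof (cases "w' = w")
      case True thus ?thesis using pf_up[OF w' _ sup_ge2] m(1) by blast
    next
      case False hence "M \<in> w'" using M(1) \<open>w' \<in> insert w W\<close> by auto
      thus ?thesis using pf_up[OF w' _ sup_ge1] by blast
    qed
  qed
  moreover have "\<forall>q\<in>Q. sup M m \<notin> q"
  proof
    fix q assume "q \<in> Q"
    hence "q \<in> Spec" "M \<notin> q" "m \<notin> q" using M(2) m(2) insert.prems(3) by auto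
    thus "sup M m \<notin> q" using pf_sup_notin by blast
  qed
  ultimately show ?case by blast
qed

lemma Mk: "\<exists>M::'a. enat k \<le> codim M \<and> (\<forall>b. enat k \<le> codim b \<longrightarrow> b \<le> M)"
proof -
  define W where "W = {w \<in> (Spec::'a set set). ht w = enat k}"
  define Q where "Q = {q \<in> (Spec::'a set set). ht q < enat k}"
  have fW: "finite W" unfolding W_def by (rule finite_subset[OF _ finite_low[of k]]) auto
  have fQ: "finite Q" unfolding Q_def by (rule finite_subset[OF _ finite_low[of k]]) auto
  have "\<forall>w\<in>W. \<forall>q\<in>Q. \<not> w \<subseteq> q"
  proof (intro ballI notI)
    fix w q assume "w \<in> W" "q \<in> Q" "w \<subseteq> q"
    hence "ht w \<le> ht q" using ht_mono W_def by blast
    thus False using \<open>w \<in> W\<close> \<open>q \<in> Q\<close> unfolding W_def Q_def by auto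
  qed
  from sep[OF fW _ fQ _ this] obtain M where M: "\<forall>w\<in>W. M \<in> w" "\<forall>q\<in>Q. M \<notin> q"
    unfolding W_def Q_def by blast
  have "enat k \<le> codim M" unfolding codim_ge_iff
  proof (intro ballI impI)
    fix p assume "p \<in> Spec" "M \<in> p"
    show "enat k \<le> ht p"
    proof (rule ccontr)
      assume "\<not> enat k \<le> ht p"
      hence "p \<in> Q" using \<open>p \<in> Spec\<close> unfolding Q_def by auto
      thus False using M(2) \<open>M \<in> p\<close> by blast
    qed
  qed
  moreover have "b \<le> M" if b: "enat k \<le> codim b" for b
  proof (rule ccontr)
    assume "\<not> b \<le> M"
    hence "cominus b M \<noteq> bot" by (simp add: cm_zero_iff)
    from GEN[OF this] obtain r where r: "r \<in> Spec" "b \<in> r" "M \<notin> r" "ht r = codim (cominus b M)"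
      "codim (cominus b M) \<noteq> \<infinity>" by blast
    then obtain m where m: "ht r = enat m" by (cases "ht r") auto
    have "codim b \<le> ht r" using codim_le[OF r(1,2)] .
    with b m have "k \<le> m" by (metis enat_ord_simps(1) order_trans)
    from ht_descend[OF r(1) m this] obtain z where z: "z \<in> Spec" "z \<subseteq> r" "ht z = enat k" by blast
    hence "z \<in> W" unfolding W_def by simp
    with M(1) z(2) r(3) show False by blast
  qed
  ultimately show ?thesis by blast
qed

lemma principal:
  assumes p: "p \<in> Spec" and hp: "ht p = enat n"
  shows "\<exists>g::'a. p = {y. g \<le> y}"
proof -
  define Q where "Q = {q \<in> (Spec::'a set set). ht q < enat n}"
  define Z where "Z = {z \<in> (Spec::'a set set). ht z = enat n \<and> z \<noteq> p}"
  have fQ: "finite Q" unfolding Q_def by (rule finite_subset[OF _ finite_low[of n]]) auto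
  have fZ: "finite Z" unfolding Z_def by (rule finite_subset[OF _ finite_low[of n]]) auto
  have "\<forall>q\<in>Q. \<not> p \<subseteq> q"
  proof (intro ballI notI)
    fix q assume "q \<in> Q" "p \<subseteq> q"
    hence "ht p \<le> ht q" using ht_mono[OF p] by blast
    thus False using \<open>q \<in> Q\<close> hp unfolding Q_def by auto
  qed
  from avoid[OF fQ _ p this] obtain x where x: "x \<in> p" "\<forall>q\<in>Q. x \<notin> q" unfolding Q_def by blast
  have "\<forall>z\<in>Z. \<forall>q\<in>{p}. \<not> z \<subseteq> q"
  proof (intro ballI notI)
    fix z q assume "z \<in> Z" "q \<in> {p}" "z \<subseteq> q"
    hence zp: "z \<subset> p" "z \<in> Spec" unfolding Z_def by auto
    from ht_strict[OF zp(2,1) hp] obtain n' where "ht z = enat n'" "n' < n" by blast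
    thus False using \<open>z \<in> Z\<close> unfolding Z_def by simp
  qed
  from sep[OF fZ _ _ _ this] p obtain C where C: "\<forall>z\<in>Z. C \<in> z" "C \<notin> p" unfolding Z_def by auto
  define g where "g = cominus x C"
  have "sup C g \<in> p" using pf_up[OF p x(1) cm_cover] unfolding g_def .
  hence gp: "g \<in> p" using pf_sup[OF p] C(2) by blast
  have "g \<le> b" if bp: "b \<in> p" for b
  proof (rule ccontr)
    assume "\<not> g \<le> b"
    hence "cominus (cominus x C) b \<noteq> bot" unfolding g_def cm_zero_iff .
    hence "cominus x (sup C b) \<noteq> bot" by (simp add: cm_cm)
    from GEN[OF this] obtain r where r: "r \<in> Spec" "x \<in> r" "sup C b \<notin> r" "ht r = codim (cominus x (sup C b))"
      "codim (cominus x (sup C b)) \<noteq> \<infinity>" by blast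
    then obtain m where m: "ht r = enat m" by (cases "ht r") auto
    have Cr: "C \<notin> r"
    proof
      assume "C \<in> r" from pf_up[OF r(1) this sup_ge1] r(3) show False by blast
    qed
    have br: "b \<notin> r"
    proof
      assume "b \<in> r" from pf_up[OF r(1) this sup_ge2] r(3) show False by blast
    qed
    have "r \<notin> Q" using x(2) r(2) by blast
    hence "n \<le> m" using r(1) m unfolding Q_def by auto
    from ht_descend[OF r(1) m this] obtain z where z: "z \<in> Spec" "z \<subseteq> r" "ht z = enat n" by blast
    show False
    proof (cases "z = p")
      case True thus False using z(2) bp br by blast
    next
      case False hence "z \<in> Z" using z unfolding Z_def by simp
      thus False using C(1) z(2) Cr by blast
    qed
  qed
  hence "p = {y. g \<le> y}" using pf_up[OF p gp] by auto
  thus ?thesis by blast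
qed

lemma pr_ji: assumes ji: "join_irred (x::'a)" shows "{y. x \<le> y} \<in> Spec"
  unfolding Spec_def prime_filter_def
proof (rule CollectI, intro conjI allI impI)
  show "top \<in> {y. x \<le> y}" by simp
  show "bot \<notin> {y. x \<le> y}" using ji by (simp add: join_irred_def bot_unique)
  show "b \<in> {y. x \<le> y}" if "a \<in> {y. x \<le> y}" "a \<le> b" for a b
    using that by (simp add: order_trans[of x a b])
  show "inf a b \<in> {y. x \<le> y}" if "a \<in> {y. x \<le> y}" "b \<in> {y. x \<le> y}" for a b
    using that by simp
  show "a \<in> {y. x \<le> y} \<or> b \<in> {y. x \<le> y}" if "sup a b \<in> {y. x \<le> y}" for a b
    using that ji by (simp add: join_irred_def)
qed

lemma ji_of_pr: "{y. g \<le> y} \<in> Spec \<Longrightarrow> join_irred (g::'a)"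
  unfolding join_irred_def Spec_def prime_filter_def by auto

lemma codim_ji: "join_irred (x::'a) \<Longrightarrow> codim x = ht {y. x \<le> y}"
proof -
  assume ji: "join_irred x"
  have P: "{y. x \<le> y} \<in> Spec" using pr_ji[OF ji] .
  have "codim x \<le> ht {y. x \<le> y}" by (rule codim_le[OF P]) simp
  moreover have "ht {y. x \<le> y} \<le> codim x" unfolding codim_ge_iff
  proof (intro ballI impI)
    fix p assume "p \<in> Spec" "x \<in> p"
    hence "{y. x \<le> y} \<subseteq> p" using pf_up by blast
    thus "ht {y. x \<le> y} \<le> ht p" by (rule ht_mono[OF P])
  qed
  ultimately show ?thesis by (rule order_antisym)
qed

lemma ji_nz: "join_irred x \<Longrightarrow> x \<noteq> (bot::'a)" by (simp add: join_irred_def)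

lemma codim_ji_fin: "join_irred (x::'a) \<Longrightarrow> \<exists>n. codim x = enat n"
proof -
  assume "join_irred x"
  from codim_fin[OF ji_nz[OF this]] show ?thesis by (cases "codim x") auto
qed

lemma ji_strict: "join_irred (x::'a) \<Longrightarrow> join_irred y \<Longrightarrow> x < y \<Longrightarrow> codim y < codim x"
proof -
  assume jx: "join_irred x" and jy: "join_irred y" and xy: "x < y"
  have "{z. y \<le> z} \<subseteq> {z. x \<le> z}"
  proof
    fix z assume "z \<in> {z. y \<le> z}"
    hence "y \<le> z" by simp
    with less_imp_le[OF xy] have "x \<le> z" by (rule order_trans)
    thus "z \<in> {z. x \<le> z}" by simp
  qed
  moreover have "x \<in> {z. x \<le> z}" "x \<notin> {z. y \<le> z}" using xy by auto
  ultimately have "{z. y \<le> z} \<subset> {z. x \<le> z}" by blast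
  moreover obtain n where n: "codim x = enat n" using codim_ji_fin[OF jx] by blast
  ultimately obtain n' where "ht {z. y \<le> z} = enat n'" "n' < n"
    using ht_strict[OF pr_ji[OF jy]] codim_ji[OF jx] by metis
  thus ?thesis using codim_ji[OF jy] n by simp
qed

lemma XJ: "join_irred (x::'a) \<Longrightarrow> codim x \<le> enat d \<Longrightarrow> cominus x b \<in> dL (Suc d) \<Longrightarrow> x \<le> b"
proof -
  assume ji: "join_irred x" and cx: "codim x \<le> enat d" and e: "cominus x b \<in> dL (Suc d)"
  have "x \<le> sup b (cominus x b)" by (rule cm_cover)
  hence "x \<le> b \<or> x \<le> cominus x b" using ji unfolding join_irred_def by blast
  moreover have "\<not> x \<le> cominus x b"
  proof
    assume "x \<le> cominus x b"
    hence "x \<in> dL (Suc d)" using dL_down[OF e] by blast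
    hence "enat (Suc d) \<le> codim x" by (simp add: dL_iff)
    from order_trans[OF this cx] show False by simp
  qed
  ultimately show ?thesis by blast
qed

end


context chp begin

lemma ji_finite_join: assumes ji: "join_irred (x::'a)" and fin: "finite B"
  shows "\<exists>t. (\<forall>b\<in>B. b \<le> t) \<and> (x \<le> t \<longrightarrow> (\<exists>b\<in>B. x \<le> b))"
  using fin
proof (induction B rule: finite_induct)
  case empty
  have "\<not> x \<le> bot" using ji_nz[OF ji] by (simp add: bot_unique)
  thus ?case by blast
next
  case (insert b B)
  then obtain t where t: "\<forall>b\<in>B. b \<le> t" "x \<le> t \<longrightarrow> (\<exists>b\<in>B. x \<le> b)" by blast
  have "\<forall>b'\<in>insert b B. b' \<le> sup b t" using t(1) by (auto intro: le_supI2)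
  moreover have "x \<le> sup b t \<longrightarrow> (\<exists>b'\<in>insert b B. x \<le> b')"
    using ji t(2) unfolding join_irred_def by blast
  ultimately show ?case by blast
qed

lemma cji_ji: "x \<in> cji (\<le>) UNIV (bot::'a) \<Longrightarrow> join_irred x"
  unfolding join_irred_def
proof (intro conjI allI impI)
  assume x: "x \<in> cji (\<le>) UNIV (bot::'a)"
  thus "x \<noteq> bot" by (simp add: cji_def)
  fix a b assume "x \<le> sup a b"
  have "is_lub (\<le>) UNIV {a, b} (sup a b)" unfolding is_lub_def by auto
  with x \<open>x \<le> sup a b\<close> have "\<exists>c\<in>{a,b}. x \<le> c" unfolding cji_def by blast
  thus "x \<le> a \<or> x \<le> b" by blast
qed

lemma ji_cji: assumes ji: "join_irred (x::'a)" shows "x \<in> cji (\<le>) UNIV bot"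
  unfolding cji_def
proof (intro CollectI conjI allI impI)
  show "x \<in> UNIV" by simp
  show "x \<noteq> bot" using ji_nz[OF ji] .
  fix A s assume lub: "is_lub (\<le>) UNIV A s" and xs: "x \<le> s"
  show "\<exists>a\<in>A. x \<le> a"
  proof (rule ccontr)
    assume N: "\<not> (\<exists>a\<in>A. x \<le> a)"
    obtain n where n: "codim x = enat n" using codim_ji_fin[OF ji] by blast
    let ?I = "dL (Suc n) :: 'a set"
    have "(\<lambda>a. qrel ?I `` {a}) ` A \<subseteq> quot ?I" unfolding quot_def by (auto intro: quotientI)
    hence "finite ((\<lambda>a. qrel ?I `` {a}) ` A)" by (rule finite_subset[OF _ finite_quot])
    from finite_reps[OF this] obtain A0 where A0: "A0 \<subseteq> A" "finite A0"
      "\<forall>a\<in>A. \<exists>a0\<in>A0. qrel ?I `` {a} = qrel ?I `` {a0}" by blast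
    from ji_finite_join[OF ji A0(2)] obtain t where t: "\<forall>b\<in>A0. b \<le> t" "x \<le> t \<longrightarrow> (\<exists>b\<in>A0. x \<le> b)" by blast
    obtain M :: 'a where M: "enat (Suc n) \<le> codim M" "\<forall>b. enat (Suc n) \<le> codim b \<longrightarrow> b \<le> M" using Mk[of "Suc n"] by blast
    have up: "a \<le> sup t M" if "a \<in> A" for a
    proof -
      from A0(3) that obtain a0 where a0: "a0 \<in> A0" "qrel ?I `` {a} = qrel ?I `` {a0}" by blast
      have "a \<in> qrel ?I `` {a}" using qrel_refl by simp
      hence "(a0, a) \<in> qrel ?I" using a0(2) by simp
      hence "cominus a a0 \<in> ?I" by (simp add: qrel_iff)
      hence "cominus a a0 \<le> M" using M(2) by (simp add: dL_iff)
      hence "a \<le> sup a0 M" by (simp add: cm_le_iff)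
      moreover have "sup a0 M \<le> sup t M" using t(1) a0(1) by (simp add: sup.coboundedI1)
      ultimately show ?thesis by (rule order_trans)
    qed
    have "s \<le> sup t M" using lub up unfolding is_lub_def by blast
    with xs have "x \<le> sup t M" by (rule order_trans)
    hence "x \<le> t \<or> x \<le> M" using ji unfolding join_irred_def by blast
    thus False
    proof
      assume "x \<le> t" thus False using t(2) A0(1) N by blast
    next
      assume "x \<le> M"
      hence "codim M \<le> codim x" by (rule codim_anti)
      from order_trans[OF M(1) this] n show False by simp
    qed
  qed
qed

lemma cji_iff: "x \<in> cji (\<le>) UNIV (bot::'a) \<longleftrightarrow> join_irred x"
  using cji_ji ji_cji by blast

lemma pr_strict: "(x::'a) < y \<Longrightarrow> {z. y \<le> z} \<subset> {z. x \<le> z}"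
proof -
  assume xy: "x < y"
  have "{z. y \<le> z} \<subseteq> {z. x \<le> z}"
  proof
    fix z assume "z \<in> {z. y \<le> z}"
    hence "y \<le> z" by simp
    with less_imp_le[OF xy] have "x \<le> z" by (rule order_trans)
    thus "z \<in> {z. x \<le> z}" by simp
  qed
  moreover have "x \<in> {z. x \<le> z}" "x \<notin> {z. y \<le> z}" using xy by auto
  ultimately show ?thesis by blast
qed

lemma rank_ge_equiv:
  "join_irred (x::'a) \<Longrightarrow> rank_ge (\<lambda>y x. x < y) (cji (\<le>) UNIV bot) x n \<longleftrightarrow> rank_ge (\<lambda>q p. q \<subset> p) Spec {y. x \<le> y} n"
proof (induction n arbitrary: x)
  case 0 thus ?case by simp
next
  case (Suc n)
  show ?case
  proof
    assume "rank_ge (\<lambda>y x. x < y) (cji (\<le>) UNIV bot) x (Suc n)"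
    then obtain y where y: "y \<in> cji (\<le>) UNIV bot" "x < y" "rank_ge (\<lambda>y x. x < y) (cji (\<le>) UNIV bot) y n" by auto
    have jy: "join_irred y" using y(1) cji_iff by blast
    from Suc.IH[OF jy] y(3) have "rank_ge (\<lambda>q p. q \<subset> p) Spec {z. y \<le> z} n" by blast
    moreover have "{z. y \<le> z} \<in> Spec" by (rule pr_ji[OF jy])
    moreover have "{z. y \<le> z} \<subset> {z. x \<le> z}" by (rule pr_strict[OF y(2)])
    ultimately show "rank_ge (\<lambda>q p. q \<subset> p) Spec {y. x \<le> y} (Suc n)" by auto
  next
    assume "rank_ge (\<lambda>q p. q \<subset> p) Spec {y. x \<le> y} (Suc n)"
    then obtain q where q: "q \<in> Spec" "q \<subset> {y. x \<le> y}" "rank_ge (\<lambda>q p. q \<subset> p) Spec q n" by auto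
    obtain N where N: "codim x = enat N" using codim_ji_fin[OF Suc.prems] by blast
    hence "ht {y. x \<le> y} = enat N" using codim_ji[OF Suc.prems] by simp
    from ht_strict[OF q(1,2) this] obtain n' where "ht q = enat n'" by blast
    from principal[OF q(1) this] obtain g where g: "q = {y. g \<le> y}" by blast
    have jg: "join_irred g" using ji_of_pr q(1) g by blast
    have "x \<le> g" using q(2) g by auto
    moreover have "x \<noteq> g" using q(2) g by auto
    ultimately have xg: "x < g" by simp
    from Suc.IH[OF jg] q(3) g have "rank_ge (\<lambda>y x. x < y) (cji (\<le>) UNIV bot) g n" by simp
    with xg jg show "rank_ge (\<lambda>y x. x < y) (cji (\<le>) UNIV bot) x (Suc n)" using cji_iff by auto
  qed
qed

lemma part3: "x \<in> cji (\<le>) (UNIV::'a set) bot \<Longrightarrow>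
           rank (\<lambda>y x. x < y) (cji (\<le>) UNIV bot) x \<noteq> \<infinity> \<and>
           rank (\<lambda>y x. x < y) (cji (\<le>) UNIV bot) x = codim x"
proof -
  assume "x \<in> cji (\<le>) (UNIV::'a set) bot"
  hence ji: "join_irred x" using cji_iff by blast
  have "rank (\<lambda>y x. x < y) (cji (\<le>) UNIV bot) x = rank (\<lambda>q p. q \<subset> p) Spec {y. x \<le> y}"
    by (rule rank_eqI) (rule rank_ge_equiv[OF ji])
  also have "\<dots> = codim x" using codim_ji[OF ji] by (simp add: height_def)
  finally show ?thesis using codim_ji_fin[OF ji] by auto
qed

lemma part4: "\<not> (\<exists>f :: nat \<Rightarrow> 'a. (\<forall>n. f n \<in> cji (\<le>) UNIV bot) \<and> (\<forall>n. f n < f (Suc n)))"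
proof
  assume "\<exists>f :: nat \<Rightarrow> 'a. (\<forall>n. f n \<in> cji (\<le>) UNIV bot) \<and> (\<forall>n. f n < f (Suc n))"
  then obtain f :: "nat \<Rightarrow> 'a" where f: "\<forall>n. join_irred (f n)" "\<forall>n. f n < f (Suc n)" using cji_iff by blast
  define g where "g n = the_enat (codim (f n))" for n
  have cg: "codim (f n) = enat (g n)" for n
    using codim_ji_fin[of "f n"] f(1) unfolding g_def by auto
  have "g (Suc n) < g n" for n
    using ji_strict[of "f n" "f (Suc n)"] f cg by simp
  thus False using no_desc_nat by blast
qed

lemma comp_above: "join_irred (y::'a) \<Longrightarrow> y \<le> a \<Longrightarrow> \<exists>k\<in>ji_components a. y \<le> k"
proof -
  assume jy: "join_irred y" and ya: "y \<le> a"
  define P where "P z \<longleftrightarrow> join_irred z \<and> y \<le> z \<and> z \<le> a" for z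
  have "P y" using jy ya unfolding P_def by simp
  from ex_has_least_nat[of P y "\<lambda>z. the_enat (codim z)", OF this] obtain z
    where z: "P z" "\<forall>z'. P z' \<longrightarrow> the_enat (codim z) \<le> the_enat (codim z')" by blast
  have "z \<in> ji_components a" unfolding ji_components_def
  proof (intro CollectI conjI allI impI)
    show "join_irred z" "z \<le> a" using z(1) unfolding P_def by auto
    fix z' assume jz': "join_irred z'" and "z' \<le> a" "z \<le> z'"
    show "z' = z"
    proof (rule ccontr)
      assume "z' \<noteq> z"
      with \<open>z \<le> z'\<close> have "z < z'" by simp
      have "P z'" using z(1) \<open>z' \<le> a\<close> \<open>z \<le> z'\<close> jz' unfolding P_def by (auto intro: order_trans)
      hence le: "the_enat (codim z) \<le> the_enat (codim z')" using z(2) by blast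
      have jz: "join_irred z" using z(1) unfolding P_def by simp
      have lt: "codim z' < codim z" by (rule ji_strict[OF jz jz' \<open>z < z'\<close>])
      obtain m m' where "codim z = enat m" "codim z' = enat m'"
        using codim_ji_fin[OF jz] codim_ji_fin[OF jz'] by blast
      with le lt show False by simp
    qed
  qed
  moreover have "y \<le> z" using z(1) unfolding P_def by simp
  ultimately show ?thesis by blast
qed

lemma part5: "is_lub (\<le>) UNIV (ji_components a) (a::'a)"
  unfolding is_lub_def
proof (intro conjI ballI impI)
  show "a \<in> UNIV" by simp
  show "k \<le> a" if "k \<in> ji_components a" for k using that unfolding ji_components_def by simp
  fix t assume ub: "\<forall>k\<in>ji_components a. k \<le> t"
  show "a \<le> t"
  proof (rule ccontr)
    assume "\<not> a \<le> t"
    hence "cominus a t \<noteq> bot" by (simp add: cm_zero_iff)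
    from GEN[OF this] obtain r where r: "r \<in> Spec" "cominus a t \<in> r" "t \<notin> r" "ht r = codim (cominus a t)"
      "codim (cominus a t) \<noteq> \<infinity>" by blast
    then obtain m where "ht r = enat m" by (cases "ht r") auto
    from principal[OF r(1) this] obtain y where y: "r = {z. y \<le> z}" by blast
    have jy: "join_irred y" using ji_of_pr r(1) y by blast
    have "y \<le> cominus a t" using r(2) y by simp
    hence "y \<le> a" using cm_le order_trans by blast
    from comp_above[OF jy this] obtain k where "k \<in> ji_components a" "y \<le> k" by blast
    with ub have "y \<le> t" using order_trans by blast
    thus False using r(3) y by simp
  qed
qed

end


context chp begin

lemma class_eq: "(a,b) \<in> qrel (dL k :: 'a set) \<Longrightarrow> qrel (dL k) `` {a} = qrel (dL k) `` {b}"
proof -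
  assume ab: "(a,b) \<in> qrel (dL k :: 'a set)"
  have ba: "(b,a) \<in> qrel (dL k)" using qrel_sym[OF ab] .
  show ?thesis
  proof
    show "qrel (dL k) `` {a} \<subseteq> qrel (dL k) `` {b}" using qrel_trans[OF ba] by auto
    show "qrel (dL k) `` {b} \<subseteq> qrel (dL k) `` {a}" using qrel_trans[OF ab] by auto
  qed
qed

lemma class_self: "a \<in> qrel (dL k :: 'a set) `` {a}" using qrel_refl by simp

lemma class_rel: "X \<in> quot (dL k :: 'a set) \<Longrightarrow> b \<in> X \<Longrightarrow> c \<in> X \<Longrightarrow> (b,c) \<in> qrel (dL k)"
proof -
  assume "X \<in> quot (dL k :: 'a set)" "b \<in> X" "c \<in> X"
  then obtain z where z: "X = qrel (dL k) `` {z}" unfolding quot_def by (auto elim: quotientE)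
  with \<open>b \<in> X\<close> \<open>c \<in> X\<close> have "(z,b) \<in> qrel (dL k)" "(z,c) \<in> qrel (dL k)" by auto
  thus ?thesis using qrel_sym qrel_trans by blast
qed

lemma class_ne: "X \<in> quot (dL k :: 'a set) \<Longrightarrow> \<exists>b. b \<in> X"
  unfolding quot_def by (auto elim!: quotientE intro: qrel_refl)

lemma class_of: "X \<in> quot (dL k :: 'a set) \<Longrightarrow> b \<in> X \<Longrightarrow> X = qrel (dL k) `` {b}"
proof -
  assume "X \<in> quot (dL k :: 'a set)" "b \<in> X"
  then obtain z where z: "X = qrel (dL k) `` {z}" unfolding quot_def by (auto elim: quotientE)
  with \<open>b \<in> X\<close> have "(z,b) \<in> qrel (dL k)" by auto
  from class_eq[OF this] z show ?thesis by simp
qed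

lemma hat_cls: "\<xi> \<in> hatL \<Longrightarrow> \<xi> d \<in> quot (dL (Suc d) :: 'a set)"
  unfolding hatL_def by blast

lemma hat_sub: "\<xi> \<in> hatL \<Longrightarrow> \<xi> (Suc d) \<subseteq> (\<xi> d :: 'a set)"
proof
  fix b assume "\<xi> \<in> hatL" "b \<in> \<xi> (Suc d)"
  hence "\<xi> d = qrel (dL (Suc d)) `` \<xi> (Suc d)" unfolding hatL_def by blast
  moreover have "b \<in> qrel (dL (Suc d)) `` \<xi> (Suc d)" using \<open>b \<in> \<xi> (Suc d)\<close> qrel_refl[of b "Suc d"] by blast
  ultimately show "b \<in> \<xi> d" by simp
qed

lemma hat_sub_le: "\<xi> \<in> hatL \<Longrightarrow> d \<le> m \<Longrightarrow> \<xi> m \<subseteq> (\<xi> d :: 'a set)"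
proof (induction m)
  case 0 thus ?case by simp
next
  case (Suc m)
  show ?case
  proof (cases "d = Suc m")
    case False
    hence "\<xi> m \<subseteq> \<xi> d" using Suc by simp
    with hat_sub[OF Suc.prems(1), of m] show ?thesis by blast
  qed simp
qed

lemma cm_sup_left: "cominus (sup b c) c = cominus (b::'a) c"
  by (rule cm_eqI) (simp add: cm_le_iff)

lemma quot_le_D:
  assumes X: "X \<in> quot (dL k :: 'a set)" and Y: "Y \<in> quot (dL k)" and le: "quot_le (dL k) X Y"
    and b: "b \<in> X" and c: "c \<in> Y"
  shows "cominus b c \<in> dL k"
proof -
  from le obtain a0 b0 where ab: "a0 \<in> X" "b0 \<in> Y" "(sup a0 b0, b0) \<in> qrel (dL k)"
    unfolding quot_le_def by blast
  have "cominus (sup a0 b0) b0 \<in> dL k" using ab(3) by (simp add: qrel_iff)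
  hence e1: "cominus a0 b0 \<in> dL k" by (simp add: cm_sup_left)
  have e0: "cominus b a0 \<in> dL k" using class_rel[OF X b ab(1)] by (simp add: qrel_iff)
  have e2: "cominus b0 c \<in> dL k" using class_rel[OF Y ab(2) c] by (simp add: qrel_iff)
  have "cominus b c \<le> sup (cominus b a0) (cominus a0 c)" by (rule cm_triangle)
  also have "cominus a0 c \<le> sup (cominus a0 b0) (cominus b0 c)" by (rule cm_triangle)
  hence "sup (cominus b a0) (cominus a0 c) \<le> sup (cominus b a0) (sup (cominus a0 b0) (cominus b0 c))"
    by (rule sup_mono[OF order_refl])
  finally show ?thesis using dL_down dL_sup e0 e1 e2 by blast
qed

lemma quot_le_I: "b \<in> X \<Longrightarrow> c \<in> Y \<Longrightarrow> cominus b c \<in> dL k \<Longrightarrow> quot_le (dL k :: 'a set) X Y"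
proof -
  assume "b \<in> X" "c \<in> Y" "cominus b c \<in> dL k"
  moreover have "cominus c (sup b c) = bot" by (simp add: cm_zero_iff)
  ultimately have "(sup b c, c) \<in> qrel (dL k)" by (simp add: qrel_iff cm_sup_left dL_bot)
  thus ?thesis unfolding quot_le_def using \<open>b \<in> X\<close> \<open>c \<in> Y\<close> by blast
qed

lemma hat_emb_in: "hat_emb (a::'a) \<in> hatL"
  unfolding hatL_def hat_emb_def
proof (intro CollectI conjI allI)
  fix d
  show "qrel (dL (Suc d)) `` {a} \<in> quot (dL (Suc d))" unfolding quot_def by (rule quotientI) simp
  show "qrel (dL (Suc d)) `` {a} = qrel (dL (Suc d)) `` (qrel (dL (Suc (Suc d))) `` {a})"
  proof
    show "qrel (dL (Suc d)) `` {a} \<subseteq> qrel (dL (Suc d)) `` (qrel (dL (Suc (Suc d))) `` {a})"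
      using qrel_refl by blast
    show "qrel (dL (Suc d)) `` (qrel (dL (Suc (Suc d))) `` {a}) \<subseteq> qrel (dL (Suc d)) `` {a}"
    proof
      fix c assume "c \<in> qrel (dL (Suc d)) `` (qrel (dL (Suc (Suc d))) `` {a})"
      then obtain b where "(a,b) \<in> qrel (dL (Suc (Suc d)))" "(b,c) \<in> qrel (dL (Suc d))" by blast
      hence "(a,b) \<in> qrel (dL (Suc d))" using qrel_mono[of "Suc d" "Suc (Suc d)"] by simp
      with \<open>(b,c) \<in> qrel (dL (Suc d))\<close> show "c \<in> qrel (dL (Suc d)) `` {a}" using qrel_trans by blast
    qed
  qed
qed

lemma hat_emb_cls: "hat_emb a d = qrel (dL (Suc d)) `` {a::'a}" by (simp add: hat_emb_def)

lemma HE1: "join_irred (x::'a) \<Longrightarrow> \<xi> \<in> hatL \<Longrightarrow> hat_le (hat_emb x) \<xi> \<Longrightarrow> codim x \<le> enat d \<Longrightarrow> c \<in> \<xi> d \<Longrightarrow> x \<le> c"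
proof -
  assume ji: "join_irred x" and xi: "\<xi> \<in> hatL" and le: "hat_le (hat_emb x) \<xi>" and cx: "codim x \<le> enat d" and c: "c \<in> \<xi> d"
  have "quot_le (dL (Suc d)) (hat_emb x d) (\<xi> d)" using le unfolding hat_le_def by blast
  from quot_le_D[OF _ hat_cls[OF xi] this _ c] have "cominus x c \<in> dL (Suc d)"
    using hat_cls[OF hat_emb_in] class_self hat_emb_cls by metis
  from XJ[OF ji cx this] show ?thesis .
qed

lemma HE2: "join_irred (x::'a) \<Longrightarrow> \<xi> \<in> hatL \<Longrightarrow> codim x \<le> enat n \<Longrightarrow> b \<in> \<xi> n \<Longrightarrow> x \<le> b \<Longrightarrow> hat_le (hat_emb x) \<xi>"
  unfolding hat_le_def
proof
  fix d assume ji: "join_irred x" and xi: "\<xi> \<in> hatL" and cx: "codim x \<le> enat n" and b: "b \<in> \<xi> n" and xb: "x \<le> b"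
  have "\<exists>c\<in>\<xi> d. x \<le> c"
  proof (cases "d \<le> n")
    case True thus ?thesis using hat_sub_le[OF xi True] b xb by blast
  next
    case False
    obtain c where c: "c \<in> \<xi> d" using class_ne[OF hat_cls[OF xi]] by blast
    have "c \<in> \<xi> n" using hat_sub_le[OF xi, of n d] False c by auto
    hence "cominus b c \<in> dL (Suc n)" using class_rel[OF hat_cls[OF xi] b] by (simp add: qrel_iff)
    moreover have "cominus x c \<le> cominus b c" by (rule cm_mono[OF xb])
    ultimately have "cominus x c \<in> dL (Suc n)" using dL_down by blast
    from XJ[OF ji cx this] c show ?thesis by blast
  qed
  then obtain c where "c \<in> \<xi> d" "x \<le> c" by blast
  moreover have "cominus x c \<in> dL (Suc d)" using \<open>x \<le> c\<close> by (simp add: cm_zero_iff[THEN iffD2] dL_bot)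
  ultimately show "quot_le (dL (Suc d)) (hat_emb x d) (\<xi> d)"
    using quot_le_I[of x "hat_emb x d" c "\<xi> d"] class_self hat_emb_cls by metis
qed

lemma hat_le_refl: "\<xi> \<in> hatL \<Longrightarrow> hat_le \<xi> (\<xi> :: nat \<Rightarrow> 'a set)"
  unfolding hat_le_def
proof
  fix d assume xi: "\<xi> \<in> hatL"
  obtain b where b: "b \<in> \<xi> d" using class_ne[OF hat_cls[OF xi]] by blast
  have "cominus b b \<in> dL (Suc d)" by (simp add: cm_zero_iff[THEN iffD2] dL_bot)
  from quot_le_I[OF b b this] show "quot_le (dL (Suc d)) (\<xi> d) (\<xi> d)" .
qed

lemma D_fin: "finite F \<Longrightarrow> F \<subseteq> {r \<in> Spec. ht r \<le> enat d \<and> (a::'a) \<in> r} \<Longrightarrow>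
  \<exists>v. (\<forall>r\<in>F. v \<in> r) \<and> (\<forall>c. (\<forall>y. join_irred y \<and> y \<le> a \<and> codim y \<le> enat d \<longrightarrow> y \<le> c) \<longrightarrow> v \<le> c)"
proof (induction F rule: finite_induct)
  case empty thus ?case by (intro exI[of _ bot]) simp
next
  case (insert r F)
  then obtain v where v: "\<forall>r\<in>F. v \<in> r" "\<forall>c. (\<forall>y. join_irred y \<and> y \<le> a \<and> codim y \<le> enat d \<longrightarrow> y \<le> c) \<longrightarrow> v \<le> c" by auto
  have r: "r \<in> Spec" "ht r \<le> enat d" "a \<in> r" using insert.prems by auto
  then obtain m where m: "ht r = enat m" by (cases "ht r") auto
  from principal[OF r(1) m] obtain g where g: "r = {y. g \<le> y}" by blast
  have jg: "join_irred g" using ji_of_pr r(1) g by blast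
  have ga: "g \<le> a" using r(3) g by simp
  have cg: "codim g \<le> enat d" using codim_ji[OF jg] g r(2) by simp
  have "\<forall>r'\<in>insert r F. sup v g \<in> r'"
  proof
    fix r' assume r': "r' \<in> insert r F"
    hence r'S: "r' \<in> Spec" using insert.prems by auto
    show "sup v g \<in> r'"
    proof (cases "r' = r")
      case True thus ?thesis using g by (simp add: le_supI2)
    next
      case False hence "v \<in> r'" using v(1) r' by auto
      thus ?thesis using pf_up[OF r'S _ sup_ge1] by blast
    qed
  qed
  moreover have "\<forall>c. (\<forall>y. join_irred y \<and> y \<le> a \<and> codim y \<le> enat d \<longrightarrow> y \<le> c) \<longrightarrow> sup v g \<le> c"
    using v(2) jg ga cg by simp
  ultimately show ?case by blast
qed

lemma D_dec: "\<exists>v. cominus (a::'a) v \<in> dL (Suc d) \<and> (\<forall>c. (\<forall>y. join_irred y \<and> y \<le> a \<and> codim y \<le> enat d \<longrightarrow> y \<le> c) \<longrightarrow> v \<le> c)"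
proof -
  define F where "F = {r \<in> (Spec::'a set set). ht r \<le> enat d \<and> a \<in> r}"
  have fF: "finite F" unfolding F_def by (rule finite_subset[OF _ finite_low[of d]]) auto
  from D_fin[OF fF] obtain v where v: "\<forall>r\<in>F. v \<in> r" "\<forall>c. (\<forall>y. join_irred y \<and> y \<le> a \<and> codim y \<le> enat d \<longrightarrow> y \<le> c) \<longrightarrow> v \<le> c"
    unfolding F_def by blast
  have "cominus a v \<in> dL (Suc d)"
  proof (cases "cominus a v = bot")
    case True thus ?thesis by (simp add: dL_bot)
  next
    case False
    from GEN[OF this] obtain r where r: "r \<in> Spec" "a \<in> r" "v \<notin> r" "ht r = codim (cominus a v)" by blast
    show ?thesis
    proof (rule ccontr)
      assume "cominus a v \<notin> dL (Suc d)"
      hence "\<not> enat d < codim (cominus a v)" by (simp add: dL_iff Suc_ile_eq)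
      hence "ht r \<le> enat d" using r(4) by simp
      hence "r \<in> F" using r(1,2) unfolding F_def by simp
      thus False using v(1) r(3) by blast
    qed
  qed
  with v(2) show ?thesis by blast
qed

lemma part1a: "x \<in> cji (\<le>) UNIV (bot::'a) \<Longrightarrow> hat_emb x \<in> cji hat_le hatL (hat_emb bot)"
proof -
  assume "x \<in> cji (\<le>) UNIV (bot::'a)"
  hence ji: "join_irred x" using cji_iff by blast
  obtain n where n: "codim x = enat n" using codim_ji_fin[OF ji] by blast
  have cx: "codim x \<le> enat n" using n by simp
  let ?I = "dL (Suc n) :: 'a set"
  show ?thesis unfolding cji_def
  proof (intro CollectI conjI allI impI)
    show "hat_emb x \<in> hatL" by (rule hat_emb_in)
    show "hat_emb x \<noteq> hat_emb bot"
    proof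
      assume "hat_emb x = hat_emb bot"
      hence "qrel ?I `` {x} = qrel ?I `` {bot}" unfolding hat_emb_def by meson
      hence "(bot, x) \<in> qrel ?I" using class_self[of x] by auto
      hence "cominus x bot \<in> ?I" by (simp add: qrel_iff)
      hence "enat (Suc n) \<le> codim x" by (simp add: cm_bot dL_iff)
      with n show False by simp
    qed
    fix A S assume A: "A \<subseteq> hatL" and lub: "is_lub hat_le hatL A S" and xS: "hat_le (hat_emb x) S"
    show "\<exists>\<alpha>\<in>A. hat_le (hat_emb x) \<alpha>"
    proof (rule ccontr)
      assume N: "\<not> (\<exists>\<alpha>\<in>A. hat_le (hat_emb x) \<alpha>)"
      have S: "S \<in> hatL" using lub unfolding is_lub_def by blast
      have "(\<lambda>\<alpha>. \<alpha> n) ` A \<subseteq> quot ?I" using A hat_cls by blast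
      hence "finite ((\<lambda>\<alpha>. \<alpha> n) ` A)" by (rule finite_subset[OF _ finite_quot])
      from finite_reps[OF this] obtain A0 where A0: "A0 \<subseteq> A" "finite A0" "\<forall>\<alpha>\<in>A. \<exists>\<alpha>0\<in>A0. \<alpha> n = \<alpha>0 n" by blast
      define \<rho> where "\<rho> \<alpha> = (SOME b. b \<in> \<alpha> n)" for \<alpha> :: "nat \<Rightarrow> 'a set"
      have \<rho>in: "\<rho> \<alpha> \<in> \<alpha> n" if "\<alpha> \<in> A" for \<alpha>
      proof -
        have "\<alpha> \<in> hatL" using A that by blast
        from class_ne[OF hat_cls[OF this]] have "\<exists>b. b \<in> \<alpha> n" .
        thus ?thesis unfolding \<rho>_def by (rule someI_ex)
      qed
      have fB: "finite (\<rho> ` A0)" using A0(2) by simp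
      from ji_finite_join[OF ji fB] obtain t where t: "\<forall>b\<in>\<rho> ` A0. b \<le> t" "x \<le> t \<longrightarrow> (\<exists>b\<in>\<rho> ` A0. x \<le> b)" by blast
      have xt: "\<not> x \<le> t"
      proof
        assume "x \<le> t"
        with t(2) obtain \<alpha>0 where "\<alpha>0 \<in> A0" "x \<le> \<rho> \<alpha>0" by blast
        have a0A: "\<alpha>0 \<in> A" using \<open>\<alpha>0 \<in> A0\<close> A0(1) by blast
        hence a0L: "\<alpha>0 \<in> hatL" using A by blast
        have "hat_le (hat_emb x) \<alpha>0" by (rule HE2[OF ji a0L cx \<rho>in[OF a0A] \<open>x \<le> \<rho> \<alpha>0\<close>])
        with \<open>\<alpha>0 \<in> A0\<close> A0(1) N show False by blast
      qed
      obtain M :: 'a where M: "enat (Suc n) \<le> codim M" "\<forall>b. enat (Suc n) \<le> codim b \<longrightarrow> b \<le> M" using Mk[of "Suc n"] by blast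
      define u where "u = sup t M"
      have ub: "hat_le \<alpha> (hat_emb u)" if "\<alpha> \<in> A" for \<alpha>
        unfolding hat_le_def
      proof
        fix d
        have \<alpha>: "\<alpha> \<in> hatL" using that A by blast
        obtain a where a: "a \<in> \<alpha> (d + n)" using class_ne[OF hat_cls[OF \<alpha>]] by blast
        have ad: "a \<in> \<alpha> d" and an: "a \<in> \<alpha> n" using hat_sub_le[OF \<alpha>, of d "d+n"] hat_sub_le[OF \<alpha>, of n "d+n"] a by auto
        from A0(3) that obtain \<alpha>0 where \<alpha>0: "\<alpha>0 \<in> A0" "\<alpha> n = \<alpha>0 n" by blast
        have "\<rho> \<alpha>0 \<in> \<alpha> n" using \<rho>in[of \<alpha>0] \<alpha>0 A0(1) by auto
        hence "cominus a (\<rho> \<alpha>0) \<in> ?I" using class_rel[OF hat_cls[OF \<alpha>] _ an] by (simp add: qrel_iff)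
        hence "cominus a (\<rho> \<alpha>0) \<le> M" using M(2) by (simp add: dL_iff)
        hence "a \<le> sup (\<rho> \<alpha>0) M" by (simp add: cm_le_iff)
        moreover have "sup (\<rho> \<alpha>0) M \<le> u" unfolding u_def using t(1) \<alpha>0(1) by (simp add: sup.coboundedI1)
        ultimately have "a \<le> u" by (rule order_trans)
        hence "cominus a u \<in> dL (Suc d)" by (simp add: cm_zero_iff[THEN iffD2] dL_bot)
        thus "quot_le (dL (Suc d)) (\<alpha> d) (hat_emb u d)"
          using quot_le_I[OF ad _ , of u "hat_emb u d"] class_self hat_emb_cls by metis
      qed
      have "hat_le S (hat_emb u)" using lub ub hat_emb_in unfolding is_lub_def by blast
      hence q: "quot_le ?I (S n) (hat_emb u n)" unfolding hat_le_def by blast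
      obtain s where s: "s \<in> S n" using class_ne[OF hat_cls[OF S]] by blast
      have "x \<le> s" by (rule HE1[OF ji S xS cx s])
      have "cominus s u \<in> ?I"
        using quot_le_D[OF hat_cls[OF S] hat_cls[OF hat_emb_in] q s] class_self hat_emb_cls by metis
      moreover have "cominus x u \<le> cominus s u" by (rule cm_mono[OF \<open>x \<le> s\<close>])
      ultimately have "cominus x u \<in> ?I" using dL_down by blast
      from XJ[OF ji cx this] have "x \<le> sup t M" unfolding u_def .
      hence "x \<le> t \<or> x \<le> M" using ji unfolding join_irred_def by blast
      thus False
      proof
        assume "x \<le> t" with xt show False by simp
      next
        assume "x \<le> M"
        hence "codim M \<le> codim x" by (rule codim_anti)
        from order_trans[OF M(1) this] n show False by simp
      qed
    qed
  qed
qed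

lemma part1b: "\<xi> \<in> cji hat_le hatL (hat_emb (bot::'a)) \<Longrightarrow> \<xi> \<in> hat_emb ` cji (\<le>) (UNIV::'a set) bot"
proof -
  assume xc: "\<xi> \<in> cji hat_le hatL (hat_emb (bot::'a))"
  hence xi: "\<xi> \<in> hatL" unfolding cji_def by blast
  define A where "A = {hat_emb y | y. join_irred (y::'a) \<and> hat_le (hat_emb y) \<xi>}"
  have AL: "A \<subseteq> hatL" unfolding A_def using hat_emb_in by blast
  have lub: "is_lub hat_le hatL A \<xi>" unfolding is_lub_def
  proof (intro conjI ballI impI)
    show "\<xi> \<in> hatL" by (rule xi)
    show "hat_le \<alpha> \<xi>" if "\<alpha> \<in> A" for \<alpha> using that unfolding A_def by blast
    fix \<theta> assume th: "\<theta> \<in> hatL" and ub: "\<forall>\<alpha>\<in>A. hat_le \<alpha> \<theta>"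
    show "hat_le \<xi> \<theta>" unfolding hat_le_def
    proof
      fix d
      obtain a where a: "a \<in> \<xi> d" using class_ne[OF hat_cls[OF xi]] by blast
      obtain c where c: "c \<in> \<theta> d" using class_ne[OF hat_cls[OF th]] by blast
      from D_dec[of a d] obtain v where v: "cominus a v \<in> dL (Suc d)"
        "\<forall>c. (\<forall>y. join_irred y \<and> y \<le> a \<and> codim y \<le> enat d \<longrightarrow> y \<le> c) \<longrightarrow> v \<le> c" by blast
      have "\<forall>y. join_irred y \<and> y \<le> a \<and> codim y \<le> enat d \<longrightarrow> y \<le> c"
      proof (intro allI impI)
        fix y assume y: "join_irred y \<and> y \<le> a \<and> codim y \<le> enat d"
        hence "hat_le (hat_emb y) \<xi>" using HE2[OF _ xi _ a] by blast
        hence "hat_emb y \<in> A" using y unfolding A_def by blast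
        hence "hat_le (hat_emb y) \<theta>" using ub by blast
        thus "y \<le> c" using HE1[OF _ th _ _ c] y by blast
      qed
      with v(2) have "v \<le> c" by blast
      hence "cominus v c = bot" by (simp add: cm_zero_iff)
      have "cominus a c \<le> sup (cominus a v) (cominus v c)" by (rule cm_triangle)
      hence "cominus a c \<le> cominus a v" using \<open>cominus v c = bot\<close> by simp
      hence "cominus a c \<in> dL (Suc d)" using dL_down[OF v(1)] by blast
      from quot_le_I[OF a c this] show "quot_le (dL (Suc d)) (\<xi> d) (\<theta> d)" .
    qed
  qed
  from xc AL lub hat_le_refl[OF xi] obtain \<alpha> where "\<alpha> \<in> A" "hat_le \<xi> \<alpha>" unfolding cji_def by blast
  then obtain y where y: "\<alpha> = hat_emb y" "join_irred y" "hat_le (hat_emb y) \<xi>" unfolding A_def by blast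
  have "\<xi> = hat_emb y"
  proof
    fix d
    obtain b where b: "b \<in> \<xi> d" using class_ne[OF hat_cls[OF xi]] by blast
    have q1: "quot_le (dL (Suc d)) (\<xi> d) (hat_emb y d)" using \<open>hat_le \<xi> \<alpha>\<close> y(1) unfolding hat_le_def by blast
    have q2: "quot_le (dL (Suc d)) (hat_emb y d) (\<xi> d)" using y(3) unfolding hat_le_def by blast
    have "cominus b y \<in> dL (Suc d)"
      using quot_le_D[OF hat_cls[OF xi] hat_cls[OF hat_emb_in] q1 b] class_self hat_emb_cls by metis
    moreover have "cominus y b \<in> dL (Suc d)"
      using quot_le_D[OF hat_cls[OF hat_emb_in] hat_cls[OF xi] q2 _ b] class_self hat_emb_cls by metis
    ultimately have "(y, b) \<in> qrel (dL (Suc d))" by (simp add: qrel_iff)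
    from class_eq[OF this] class_of[OF hat_cls[OF xi] b] show "\<xi> d = hat_emb y d"
      by (simp add: hat_emb_cls)
  qed
  moreover have "y \<in> cji (\<le>) UNIV bot" using ji_cji[OF y(2)] .
  ultimately show ?thesis by blast
qed

end

theorem proposition6p6:
  fixes T :: "'a::{distrib_lattice,bounded_lattice} itself"
  assumes "co_heyting T" and "hausdorff T" and "precompact T"
  shows "(cji hat_le hatL (hat_emb (bot::'a)) = hat_emb ` cji (\<le>) (UNIV::'a set) bot)
     \<and> (\<forall>x::'a. join_irred x \<longrightarrow> x \<in> cji (\<le>) UNIV bot)
     \<and> (\<forall>x \<in> cji (\<le>) (UNIV::'a set) bot.
           rank (\<lambda>y x. x < y) (cji (\<le>) UNIV bot) x \<noteq> \<infinity> \<and>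
           rank (\<lambda>y x. x < y) (cji (\<le>) UNIV bot) x = codim x)
     \<and> (\<not> (\<exists>f :: nat \<Rightarrow> 'a. (\<forall>n. f n \<in> cji (\<le>) UNIV bot) \<and> (\<forall>n. f n < f (Suc n))))
     \<and> (\<forall>a::'a. is_lub (\<le>) UNIV (ji_components a) a)"
proof -
  interpret chp T using assms by unfold_locales
  show ?thesis
    using part1a part1b ji_cji part3 part4 part5 by blast
qed



end
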